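(* There exists a linear operator $T:\mathbb{R}[x]\to\mathbb{R}[x]$ which is an infinite order differential operator and a hyperbolicity preserver, but which is not monotone.
   Context: $D=\frac{d}{dx}$. Every linear operator $T:\mathbb{R}[x]\to\mathbb{R}[x]$ can be written uniquely as $T=\sum_{k=0}^\infty Q_k(x)D^k$ with $Q_k\in\mathbb{R}[x]$ (meaning $T[p]=\sum_kQ_kD^k[p]$ for all polynomials $p$). $T$ is an infinite order differential operator if $Q_k\not\equiv0$ for infinitely many $k$. $T$ is a hyperbolicity preserver if $T[p]$ has only real zeros whenever $p$ has only real zeros. $T$ is monotone if the degrees of its nonzero coefficient polynomials are nondecreasing, i.e. $\deg Q_k\le\deg Q_l$ whenever $k<l$ and $Q_k\not\equiv0$, $Q_l\not\equiv0$. *)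

theory Defs
  imports "HOL-Computational_Algebra.Polynomial"
begin

definition hyperbolic :: "real poly \<Rightarrow> bool" where
  "hyperbolic p \<longleftrightarrow> p = 0 \<or>
     (\<forall>z::complex. poly (map_poly complex_of_real p) z = 0 \<longrightarrow> Im z = 0)"

definition linear_poly_op :: "(real poly \<Rightarrow> real poly) \<Rightarrow> bool" where
  "linear_poly_op T \<longleftrightarrow>
     (\<forall>p q. T (p + q) = T p + T q) \<and> (\<forall>c p. T (smult c p) = smult c (T p))"

text \<open>T = sum_k Q_k D^k : T p = sum_k Q_k * D^k p (finite sum, D^k p = 0 for k > deg p).\<close>
definition diff_rep :: "(real poly \<Rightarrow> real poly) \<Rightarrow> (nat \<Rightarrow> real poly) \<Rightarrow> bool" where
  "diff_rep T Q \<longleftrightarrow> (\<forall>p. T p = (\<Sum>k\<le>degree p. Q k * (pderiv ^^ k) p))"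

definition infinite_order :: "(nat \<Rightarrow> real poly) \<Rightarrow> bool" where
  "infinite_order Q \<longleftrightarrow> infinite {k. Q k \<noteq> 0}"

definition hyperbolicity_preserver :: "(real poly \<Rightarrow> real poly) \<Rightarrow> bool" where
  "hyperbolicity_preserver T \<longleftrightarrow> (\<forall>p. hyperbolic p \<longrightarrow> hyperbolic (T p))"

definition monotone_coeffs :: "(nat \<Rightarrow> real poly) \<Rightarrow> bool" where
  "monotone_coeffs Q \<longleftrightarrow>
     (\<forall>k l. k < l \<and> Q k \<noteq> 0 \<and> Q l \<noteq> 0 \<longrightarrow> degree (Q k) \<le> degree (Q l))"

end

theory Submission
  imports Defs
begin

lemma hpd_zero: "degree p < k \<Longrightarrow> (pderiv ^^ k) (p::real poly) = 0"
proof (induction k arbitrary: p)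
  case 0 then show ?case by simp
next
  case (Suc k)
  show ?case
  proof (cases "degree p = 0")
    case True
    then have "pderiv p = 0" by (simp add: pderiv_eq_0_iff)
    then show ?thesis by (simp add: funpow_Suc_right del: funpow.simps)
  next
    case False
    then have "degree (pderiv p) < k" using Suc.prems by (simp add: degree_pderiv)
    then show ?thesis using Suc.IH by (simp add: funpow_Suc_right del: funpow.simps)
  qed
qed

lemma monom_neg: "monom (- a) n = - monom (a::real) n"
  by (rule poly_eqI) (simp add: coeff_monom)

lemma smult_sum_r: "smult c (sum f A) = (\<Sum>i\<in>A. smult c (f i :: real poly))"
  by (induction A rule: infinite_finite_induct) (simp_all add: smult_add_right)

definition cc :: "nat \<Rightarrow> real" where "cc k = (-1)^k / fact k"

definition EE :: "nat \<Rightarrow> real poly \<Rightarrow> real poly" where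
  "EE N q = (\<Sum>k\<le>N. monom (cc k) k * (pderiv ^^ k) q)"

lemma cc_Suc: "of_nat (Suc N) * cc (Suc N) = - cc N"
proof -
    have d: "(fact N + fact N * real N) \<noteq> 0"
      by (metis add_pos_nonneg fact_gt_zero less_irrefl mult_nonneg_nonneg of_nat_0_le_iff order_less_imp_le)
    have "fact N * (- 1) ^ N + fact N * (real N * (- 1) ^ N) = (-1)^N * (fact N + fact N * real N)"
      by (simp add: algebra_simps)
    then have "(fact N * (- 1) ^ N + fact N * (real N * (- 1) ^ N)) /
     (fact N + fact N * real N) = (- 1::real) ^ N" using d by simp
    then show ?thesis by (simp add: cc_def field_simps)
qed

lemma EE_deriv: "pderiv (EE N q) = monom (cc N) N * (pderiv ^^ Suc N) q"
proof (induction N)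
  case 0
  then show ?case by (simp add: EE_def cc_def monom_0 pderiv_mult pderiv_pCons)
next
  case (Suc N)
  have e: "EE (Suc N) q = EE N q + monom (cc (Suc N)) (Suc N) * (pderiv ^^ Suc N) q"
    by (simp add: EE_def)
  have c: "of_nat (Suc N) * cc (Suc N) = - cc N" by (rule cc_Suc)
  have "pderiv (EE (Suc N) q) = monom (cc N) N * (pderiv ^^ Suc N) q
     + (monom (cc (Suc N)) (Suc N) * pderiv ((pderiv ^^ Suc N) q)
        + (pderiv ^^ Suc N) q * monom (of_nat (Suc N) * cc (Suc N)) N)"
    unfolding e pderiv_add Suc pderiv_mult pderiv_monom by simp
  also have "\<dots> = monom (cc (Suc N)) (Suc N) * (pderiv ^^ Suc (Suc N)) q"
    unfolding c by (simp add: algebra_simps monom_neg)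
  finally show ?case .
qed

lemma EE_const: "degree q \<le> N \<Longrightarrow> EE N q = [:poly q 0:]"
proof -
  assume a: "degree q \<le> N"
  have "pderiv (EE N q) = 0" unfolding EE_deriv using hpd_zero[of q "Suc N"] a by simp
  then have "degree (EE N q) = 0" by (simp add: pderiv_eq_0_iff)
  then have "EE N q = [:poly (EE N q) 0:]"
    by (metis degree_eq_zeroE poly_0_coeff_0 coeff_pCons_0)
  moreover have "poly (EE N q) 0 = poly q 0"
  proof -
    have "poly (EE N q) 0 = (\<Sum>k\<le>N. poly (monom (cc k) k) 0 * poly ((pderiv ^^ k) q) 0)"
      by (simp add: EE_def poly_sum)
    also have "\<dots> = (\<Sum>k\<in>{0}. poly (monom (cc k) k) 0 * poly ((pderiv ^^ k) q) 0)"
      by (rule sum.mono_neutral_right) (auto simp: poly_monom)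
    also have "\<dots> = poly q 0" by (simp add: cc_def poly_monom)
    finally show ?thesis .
  qed
  ultimately show ?thesis by simp
qed

definition QQ :: "nat \<Rightarrow> real poly" where
  "QQ k = monom (2 * cc k) k + (if k = 0 then 0 else monom (cc (k - 1)) k)
      + (if 2 \<le> k then monom (cc (k - 2)) (k - 2) else 0)"

definition TT :: "real poly \<Rightarrow> real poly" where
  "TT p = [: 2 * poly p 0 + poly (pderiv (pderiv p)) 0, poly (pderiv p) 0 :]"

lemma TT_rep: "diff_rep TT QQ"
  unfolding diff_rep_def
proof
  fix p :: "real poly"
  define n where "n = degree p"
  have ext: "(\<Sum>k\<le>degree p. QQ k * (pderiv ^^ k) p) = (\<Sum>k\<le>Suc (Suc n). QQ k * (pderiv ^^ k) p)"
    by (rule sum.mono_neutral_left) (auto simp: n_def hpd_zero)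
  have split: "(\<Sum>k\<le>Suc (Suc n). QQ k * (pderiv ^^ k) p) =
     (\<Sum>k\<le>Suc (Suc n). monom (2 * cc k) k * (pderiv ^^ k) p)
   + (\<Sum>k\<le>Suc (Suc n). (if k = 0 then 0 else monom (cc (k - 1)) k) * (pderiv ^^ k) p)
   + (\<Sum>k\<le>Suc (Suc n). (if 2 \<le> k then monom (cc (k - 2)) (k - 2) else 0) * (pderiv ^^ k) p)"
    unfolding QQ_def by (simp add: distrib_right sum.distrib)
  have S1: "(\<Sum>k\<le>Suc (Suc n). monom (2 * cc k) k * (pderiv ^^ k) p) = smult 2 [:poly p 0:]"
  proof -
    have "(\<Sum>k\<le>Suc (Suc n). monom (2 * cc k) k * (pderiv ^^ k) p) = smult 2 (EE (Suc (Suc n)) p)"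
      unfolding EE_def smult_sum_r smult_monom_mult ..
    then show ?thesis using EE_const[of p "Suc (Suc n)"] by (simp add: n_def)
  qed
  have S2: "(\<Sum>k\<le>Suc (Suc n). (if k = 0 then 0 else monom (cc (k - 1)) k) * (pderiv ^^ k) p)
      = monom 1 1 * [:poly (pderiv p) 0:]"
  proof -
    have "(\<Sum>k\<le>Suc (Suc n). (if k = 0 then 0 else monom (cc (k - 1)) k) * (pderiv ^^ k) p)
       = (\<Sum>k\<le>Suc n. monom (cc k) (Suc k) * (pderiv ^^ Suc k) p)"
      by (subst sum.atMost_Suc_shift) simp
    also have "\<dots> = monom 1 1 * EE (Suc n) (pderiv p)"
    proof -
      have m: "\<And>c k q. monom 1 1 * (monom c k * q) = monom c (Suc k) * (q::real poly)"
        by (simp add: mult.assoc[symmetric] mult_monom)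
      show ?thesis unfolding EE_def sum_distrib_left m funpow_Suc_right o_apply ..
    qed
    also have "\<dots> = monom 1 1 * [:poly (pderiv p) 0:]"
      by (subst EE_const) (auto simp: n_def degree_pderiv)
    finally show ?thesis .
  qed
  have S3: "(\<Sum>k\<le>Suc (Suc n). (if 2 \<le> k then monom (cc (k - 2)) (k - 2) else 0) * (pderiv ^^ k) p)
      = [:poly (pderiv (pderiv p)) 0:]"
  proof -
    have "(\<Sum>k\<le>Suc (Suc n). (if 2 \<le> k then monom (cc (k - 2)) (k - 2) else 0) * (pderiv ^^ k) p)
       = (\<Sum>k\<le>n. monom (cc k) k * (pderiv ^^ Suc (Suc k)) p)"
      by (subst sum.atMost_Suc_shift, subst sum.atMost_Suc_shift) (simp del: funpow.simps)
    also have "\<dots> = EE n (pderiv (pderiv p))"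
      by (simp add: EE_def funpow_Suc_right del: funpow.simps)
    also have "\<dots> = [:poly (pderiv (pderiv p)) 0:]"
      by (subst EE_const) (auto simp: n_def degree_pderiv)
    finally show ?thesis .
  qed
  have fin: "smult 2 [:poly p 0:] + monom 1 1 * [:poly (pderiv p) 0:] + [:poly (pderiv (pderiv p)) 0:] = TT p"
    unfolding TT_def by (rule poly_eqI) (auto simp: coeff_monom coeff_pCons split: nat.split)
  show "TT p = (\<Sum>k\<le>degree p. QQ k * (pderiv ^^ k) p)"
    unfolding ext split S1 S2 S3 fin ..
qed


lemma TT_lin: "linear_poly_op TT"
  unfolding linear_poly_op_def TT_def by (simp add: pderiv_add pderiv_smult algebra_simps)

lemma hyp_lin: "hyperbolic [:a, b:]"
proof (cases "a = 0 \<and> b = 0")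
  case True then show ?thesis by (simp add: hyperbolic_def)
next
  case False
  show ?thesis unfolding hyperbolic_def
  proof (intro disjI2 allI impI)
    fix z :: complex
    assume "poly (map_poly complex_of_real [:a, b:]) z = 0"
    then have e: "complex_of_real a + z * complex_of_real b = 0" by (simp add: map_poly_pCons)
    show "Im z = 0"
    proof (cases "b = 0")
      case True then show ?thesis using e False by simp
    next
      case f: False
      have "z = - complex_of_real a / complex_of_real b" using e f
        by (simp add: field_simps eq_neg_iff_add_eq_0 add.commute)
      then show ?thesis by simp
    qed
  qed
qed

lemma TT_hyp: "hyperbolicity_preserver TT"
  unfolding hyperbolicity_preserver_def TT_def using hyp_lin by blast

lemma QQ_nz: "3 \<le> k \<Longrightarrow> QQ k \<noteq> 0"
proof
  assume k: "3 \<le> k" and z: "QQ k = 0"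
  obtain j where j: "k = Suc j" using k by (cases k) auto
  have "coeff (QQ k) k = 2 * cc k + cc j" using k j by (simp add: QQ_def coeff_monom)
  also have "\<dots> = (2 - real k) * cc k"
    using cc_Suc[of j] j by (simp add: algebra_simps)
  finally have "(2 - real k) * cc k = 0" using z by simp
  moreover have "cc k \<noteq> 0" by (simp add: cc_def)
  ultimately show False using k by simp
qed

lemma QQ_inf: "infinite_order QQ"
  unfolding infinite_order_def
proof
  assume "finite {k. QQ k \<noteq> 0}"
  moreover have "{3..} \<subseteq> {k. QQ k \<noteq> 0}" using QQ_nz by auto
  ultimately have "finite {3::nat..}" by (rule finite_subset[rotated])
  then show False using infinite_Ici by blast
qed

lemma QQ_nonmono: "\<not> monotone_coeffs QQ"
proof -
  have q1: "QQ 1 = monom (-1) 1" by (simp add: QQ_def cc_def add_monom)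
  have q2: "QQ 2 = monom 1 0" by (simp add: QQ_def cc_def add_monom numeral_2_eq_2)
  have "1 < (2::nat)" "QQ 1 \<noteq> 0" "QQ 2 \<noteq> 0" "\<not> degree (QQ 1) \<le> degree (QQ 2)"
    unfolding q1 q2 by (simp_all add: degree_monom_eq)
  then show ?thesis unfolding monotone_coeffs_def by blast
qed

theorem mainTheorem4:
  shows "\<exists>(T :: real poly \<Rightarrow> real poly) Q. linear_poly_op T \<and> diff_rep T Q \<and>
           infinite_order Q \<and> hyperbolicity_preserver T \<and> \<not> monotone_coeffs Q"
  using TT_lin TT_rep QQ_inf TT_hyp QQ_nonmono by blast

end
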